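(* Let $\mathcal{T}$ be a planar triangulation, $m\in\mathbb{Z}_{\ge0}$, $r\in\mathbb{Z}_{\ge-1}$, and $\mathbf r$ the smoothness distribution with $\mathbf r(\tau)=r$ on interior edges, such that $\mathcal{Q}^{\mathbf r}$ is lower-acyclic. If every interior vertex of $\mathcal{T}$ has at least $r+2$ distinct slopes incident upon it and $m>\frac{3r}{2}$, then for any face $\sigma\in\mathcal{T}_2$, setting the smoothness across every edge of the boundary of $\sigma$ to $-1$ (and keeping $\mathbf r$ on all other interior edges) yields a smoothness distribution $\mathbf s$ for which $\mathcal{Q}^{\mathbf s}$ is lower-acyclic. In particular: (A) if $m\ge2$, $r=1$, and every interior vertex has edges with at least $3$ distinct slopes incident upon it, this holds; (B) if $m\ge4$, $r=2$, and every interior vertex has edges with at least $4$ distinct slopes incident upon it, this holds.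
   Context: $\mathcal{T}$ is a finite planar triangulation of a closed polygonal region $\Omega\subset\mathbb{R}^2$ (possibly not simply connected). An edge or vertex is interior if not contained in $\partial\Omega$; $\mathcal{T}^\circ_1,\mathcal{T}^\circ_0$ denote interior edges and vertices, $\mathcal{T}_2$ the faces. The number of distinct slopes at a vertex is the number of distinct directions among the edges containing it. ${\mathcal{P}}_m$ is the space of real bivariate polynomials of total degree at most $m$; $\langle f\rangle$ is the subspace of ${\mathcal{P}}_m$ of polynomial multiples of $f$ lying in ${\mathcal{P}}_m$. A smoothness distribution is a map $\mathbf{r}:\mathcal{T}^\circ_1\to\mathbb{Z}_{\ge -1}$. For $\tau\in\mathcal{T}^\circ_1$ with vanishing affine-linear form $\ell_\tau$, $\mathfrak{J}^{\mathbf r}_\tau=\langle \ell_\tau^{\mathbf r(\tau)+1}\rangle$ (equal to ${\mathcal{P}}_m$ if $\mathbf r(\tau)=-1$); for $\gamma\in\mathcal{T}^\circ_0$, $\mathfrak{J}^{\mathbf r}_\gamma=\sum_{\tau\ni\gamma}\mathfrak{J}^{\mathbf r}_\tau$. $\mathcal{C}$ is the chain complex $\bigoplus_{\sigma\in\mathcal{T}_2}{\mathcal{P}}_m\to\bigoplus_{\tau\in\mathcal{T}^\circ_1}{\mathcal{P}}_m\to\bigoplus_{\gamma\in\mathcal{T}^\circ_0}{\mathcal{P}}_m$ (degrees $2,1,0$) with cellular boundary maps of $\mathcal{T}$ relative to $\partial\Omega$ (signs $\pm1$ from fixed orientations); $\mathcal{I}^{\mathbf r}$ is the subcomplex $0\to\bigoplus_\tau\mathfrak{J}^{\mathbf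 r}_\tau\to\bigoplus_\gamma\mathfrak{J}^{\mathbf r}_\gamma$; $\mathcal{Q}^{\mathbf r}=\mathcal{C}/\mathcal{I}^{\mathbf r}$, with $H_2(\mathcal{Q}^{\mathbf r})$ the space of piecewise polynomials in ${\mathcal{P}}_m$ that are $C^{\mathbf r(\tau)}$ across each interior edge $\tau$. $\mathcal{Q}^{\mathbf r}$ is lower-acyclic if $H_1(\mathcal{Q}^{\mathbf r})=H_0(\mathcal{Q}^{\mathbf r})=0$. *)

theory Defs
  imports "HOL-Analysis.Analysis"
begin

type_synonym pt = "real \<times> real"

definition polys :: "nat \<Rightarrow> (pt \<Rightarrow> real) set" where
  "polys m = {f. \<exists>c :: nat \<Rightarrow> nat \<Rightarrow> real. \<forall>p. f p =
      (\<Sum>i\<le>m. \<Sum>j\<le>m - i. c i j * fst p ^ i * snd p ^ j)}"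

definition is_poly :: "(pt \<Rightarrow> real) \<Rightarrow> bool" where
  "is_poly g \<longleftrightarrow> (\<exists>n. g \<in> polys n)"

definition multiples :: "nat \<Rightarrow> (pt \<Rightarrow> real) \<Rightarrow> (pt \<Rightarrow> real) set" where
  "multiples m f = {h \<in> polys m. \<exists>g. is_poly g \<and> h = (\<lambda>p. f p * g p)}"

definition det2 :: "pt \<Rightarrow> pt \<Rightarrow> real" where
  "det2 u v = fst u * snd v - snd u * fst v"

definition lexless :: "pt \<Rightarrow> pt \<Rightarrow> bool" where
  "lexless a b \<longleftrightarrow> fst a < fst b \<or> (fst a = fst b \<and> snd a < snd b)"

text \<open>A planar planar_triangulation: finite set of nondegenerate triangles (as vertex sets)
  forming a geometric simplicial complex whose union is a connected region.\<close>
definition region :: "pt set set \<Rightarrow> pt set" where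
  "region T = (\<Union>\<sigma>\<in>T. convex hull \<sigma>)"

definition planar_triangulation :: "pt set set \<Rightarrow> bool" where
  "planar_triangulation T \<longleftrightarrow> finite T \<and> T \<noteq> {} \<and>
     (\<forall>\<sigma>\<in>T. \<exists>a b c. \<sigma> = {a, b, c} \<and> det2 (b - a) (c - a) \<noteq> 0) \<and>
     (\<forall>\<sigma>\<in>T. \<forall>\<sigma>'\<in>T. convex hull \<sigma> \<inter> convex hull \<sigma>' = convex hull (\<sigma> \<inter> \<sigma>')) \<and>
     connected (region T)"

definition edges :: "pt set set \<Rightarrow> pt set set" where
  "edges T = {e. \<exists>\<sigma>\<in>T. e \<subseteq> \<sigma> \<and> card e = 2}"

definition verts :: "pt set set \<Rightarrow> pt set" where
  "verts T = \<Union>T"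

definition int_edges :: "pt set set \<Rightarrow> pt set set" where
  "int_edges T = {e \<in> edges T. \<not> (convex hull e \<subseteq> frontier (region T))}"

definition int_verts :: "pt set set \<Rightarrow> pt set" where
  "int_verts T = {v \<in> verts T. v \<notin> frontier (region T)}"

definition slopes :: "pt set set \<Rightarrow> pt \<Rightarrow> pt set set" where
  "slopes T g = (\<lambda>w. span {w - g}) ` {w. w \<noteq> g \<and> {g, w} \<in> edges T}"

text \<open>Orientation of an edge: from lexicographically smaller to larger endpoint.\<close>
definition etail :: "pt set \<Rightarrow> pt" where
  "etail e = (THE u. u \<in> e \<and> (\<forall>v\<in>e. v \<noteq> u \<longrightarrow> lexless u v))"

definition ehead :: "pt set \<Rightarrow> pt" where
  "ehead e = (THE u. u \<in> e \<and> (\<forall>v\<in>e. v \<noteq> u \<longrightarrow> lexless v u))"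

definition lform :: "pt set \<Rightarrow> pt \<Rightarrow> real" where
  "lform e p = det2 (ehead e - etail e) (p - etail e)"

text \<open>Incidence sign of edge e in the boundary of the (counterclockwise oriented) face s.\<close>
definition fsign :: "pt set \<Rightarrow> pt set \<Rightarrow> real" where
  "fsign s e = (let u = etail e; v = ehead e; w = (THE w. w \<in> s - e)
               in if det2 (v - u) (w - u) > 0 then 1 else -1)"

definition vsign :: "pt \<Rightarrow> pt set \<Rightarrow> real" where
  "vsign g e = (if g = ehead e then 1 else -1)"

text \<open>Boundary maps of the relative cellular chain complex with coefficients in P_m.\<close>
definition d2 :: "pt set set \<Rightarrow> (pt set \<Rightarrow> pt \<Rightarrow> real) \<Rightarrow> pt set \<Rightarrow> pt \<Rightarrow> real" where
  "d2 T B e = (\<lambda>p. \<Sum>s\<in>{s \<in> T. e \<subseteq> s}. fsign s e * B s p)"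

definition d1 :: "pt set set \<Rightarrow> (pt set \<Rightarrow> pt \<Rightarrow> real) \<Rightarrow> pt \<Rightarrow> pt \<Rightarrow> real" where
  "d1 T F g = (\<lambda>p. \<Sum>e\<in>{e \<in> int_edges T. g \<in> e}. vsign g e * F e p)"

definition Jedge :: "nat \<Rightarrow> (pt set \<Rightarrow> int) \<Rightarrow> pt set \<Rightarrow> (pt \<Rightarrow> real) set" where
  "Jedge m rr e = multiples m (\<lambda>p. lform e p ^ nat (rr e + 1))"

definition Jvert :: "pt set set \<Rightarrow> nat \<Rightarrow> (pt set \<Rightarrow> int) \<Rightarrow> pt \<Rightarrow> (pt \<Rightarrow> real) set" where
  "Jvert T m rr g = {f. \<exists>h. (\<forall>e\<in>int_edges T. g \<in> e \<longrightarrow> h e \<in> Jedge m rr e) \<and>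
        f = (\<lambda>p. \<Sum>e\<in>{e \<in> int_edges T. g \<in> e}. h e p)}"

text \<open>Lower-acyclicity of Q^r = C / I^r: H_1(Q^r) = 0 and H_0(Q^r) = 0.\<close>
definition H1_vanishes :: "pt set set \<Rightarrow> nat \<Rightarrow> (pt set \<Rightarrow> int) \<Rightarrow> bool" where
  "H1_vanishes T m rr \<longleftrightarrow>
    (\<forall>F. (\<forall>e\<in>int_edges T. F e \<in> polys m) \<and>
         (\<forall>g\<in>int_verts T. d1 T F g \<in> Jvert T m rr g) \<longrightarrow>
       (\<exists>B K. (\<forall>s\<in>T. B s \<in> polys m) \<and> (\<forall>e\<in>int_edges T. K e \<in> Jedge m rr e) \<and>
              (\<forall>e\<in>int_edges T. \<forall>p. F e p = d2 T B e p + K e p)))"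

definition H0_vanishes :: "pt set set \<Rightarrow> nat \<Rightarrow> (pt set \<Rightarrow> int) \<Rightarrow> bool" where
  "H0_vanishes T m rr \<longleftrightarrow>
    (\<forall>G. (\<forall>g\<in>int_verts T. G g \<in> polys m) \<longrightarrow>
       (\<exists>F J. (\<forall>e\<in>int_edges T. F e \<in> polys m) \<and> (\<forall>g\<in>int_verts T. J g \<in> Jvert T m rr g) \<and>
              (\<forall>g\<in>int_verts T. \<forall>p. G g p = d1 T F g p + J g p)))"

definition lower_acyclic :: "pt set set \<Rightarrow> nat \<Rightarrow> (pt set \<Rightarrow> int) \<Rightarrow> bool" where
  "lower_acyclic T m rr \<longleftrightarrow> H1_vanishes T m rr \<and> H0_vanishes T m rr"

end

theory Submission
  imports Defs "HOL-Computational_Algebra.Polynomial"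
begin


definition dd :: "nat \<Rightarrow> (nat \<times> nat) set" where
  "dd n = (SIGMA i:{..n}. {..n-i})"

lemma dd_mem[simp]: "(i,j) \<in> dd n \<longleftrightarrow> i + j \<le> n"
  unfolding dd_def by auto

lemma finite_dd[simp]: "finite (dd n)"
  unfolding dd_def by auto

lemma polys_dd: "f \<in> polys n \<longleftrightarrow> (\<exists>c. \<forall>p. f p = (\<Sum>(i,j)\<in>dd n. c i j * fst p ^ i * snd p ^ j))"
  unfolding polys_def dd_def
  by (simp add: sum.Sigma)

lemma poly_intro:
  assumes K: "finite K" and e: "\<And>k. k \<in> K \<Longrightarrow> ex k + ey k \<le> n"
    and f: "\<And>p. f p = (\<Sum>k\<in>K. d k * fst p ^ ex k * snd p ^ ey k)"
  shows "f \<in> polys n"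
proof -
  define c where "c i j = (\<Sum>k\<in>{k. k \<in> K \<and> (ex k, ey k) = (i,j)}. d k)" for i j
  have "f p = (\<Sum>(i,j)\<in>dd n. c i j * fst p ^ i * snd p ^ j)" for p
  proof -
    have "(\<Sum>(i,j)\<in>dd n. c i j * fst p ^ i * snd p ^ j)
        = (\<Sum>ij\<in>dd n. \<Sum>k\<in>{k. k \<in> K \<and> (ex k, ey k) = ij}. d k * fst p ^ ex k * snd p ^ ey k)"
      unfolding c_def by (auto simp: sum_distrib_right intro!: sum.cong)
    also have "\<dots> = (\<Sum>k\<in>K. d k * fst p ^ ex k * snd p ^ ey k)"
      by (rule sum.group) (use K e in auto)
    finally show ?thesis using f by simp
  qed
  thus ?thesis unfolding polys_dd by blast
qed

lemma polys_elim:
  assumes "f \<in> polys n"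
  obtains c where "\<And>p. f p = (\<Sum>k\<in>dd n. c k * fst p ^ fst k * snd p ^ snd k)"
proof -
  from assms obtain c where "\<forall>p. f p = (\<Sum>(i,j)\<in>dd n. c i j * fst p ^ i * snd p ^ j)"
    unfolding polys_dd by blast
  then show ?thesis by (intro that[of "\<lambda>k. c (fst k) (snd k)"]) (metis (no_types, lifting) prod.collapse sum.cong split_beta)
qed

lemma polys_const: "(\<lambda>p. a) \<in> polys n"
  by (rule poly_intro[where K="{(0,0)}" and ex=fst and ey=snd and d="\<lambda>_. a"]) auto

lemma polys_zero: "(\<lambda>p. 0) \<in> polys n"
  using polys_const .

lemma polys_add:
  assumes "f \<in> polys n" "g \<in> polys n"
  shows "(\<lambda>p. f p + g p) \<in> polys n"
proof -
  obtain c where c: "\<And>p. f p = (\<Sum>k\<in>dd n. c k * fst p ^ fst k * snd p ^ snd k)"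
    using polys_elim[OF assms(1)] by blast
  obtain c' where c': "\<And>p. g p = (\<Sum>k\<in>dd n. c' k * fst p ^ fst k * snd p ^ snd k)"
    using polys_elim[OF assms(2)] by blast
  show ?thesis
    by (rule poly_intro[where K="dd n" and ex=fst and ey=snd and d="\<lambda>k. c k + c' k"])
       (auto simp: c c' algebra_simps sum.distrib)
qed

lemma polys_scale:
  assumes "f \<in> polys n"
  shows "(\<lambda>p. a * f p) \<in> polys n"
proof -
  obtain c where c: "\<And>p. f p = (\<Sum>k\<in>dd n. c k * fst p ^ fst k * snd p ^ snd k)"
    using polys_elim[OF assms(1)] by blast
  show ?thesis
    by (rule poly_intro[where K="dd n" and ex=fst and ey=snd and d="\<lambda>k. a * c k"])
       (auto simp: c algebra_simps sum_distrib_left)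
qed

lemma polys_mono:
  assumes "f \<in> polys n" "n \<le> n'"
  shows "f \<in> polys n'"
proof -
  obtain c where c: "\<And>p. f p = (\<Sum>k\<in>dd n. c k * fst p ^ fst k * snd p ^ snd k)"
    using polys_elim[OF assms(1)] by blast
  show ?thesis
    by (rule poly_intro[where K="dd n" and ex=fst and ey=snd and d="c"])
       (use assms(2) in \<open>auto simp: c\<close>)
qed

lemma polys_mult_x:
  assumes "f \<in> polys n"
  shows "(\<lambda>p. fst p * f p) \<in> polys (Suc n)"
proof -
  obtain c where c: "\<And>p. f p = (\<Sum>k\<in>dd n. c k * fst p ^ fst k * snd p ^ snd k)"
    using polys_elim[OF assms(1)] by blast
  show ?thesis
    by (rule poly_intro[where K="dd n" and ex="\<lambda>k. Suc (fst k)" and ey=snd and d="c"])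
       (auto simp: c algebra_simps sum_distrib_left)
qed

lemma polys_mult_y:
  assumes "f \<in> polys n"
  shows "(\<lambda>p. snd p * f p) \<in> polys (Suc n)"
proof -
  obtain c where c: "\<And>p. f p = (\<Sum>k\<in>dd n. c k * fst p ^ fst k * snd p ^ snd k)"
    using polys_elim[OF assms(1)] by blast
  show ?thesis
    by (rule poly_intro[where K="dd n" and ex=fst and ey="\<lambda>k. Suc (snd k)" and d="c"])
       (auto simp: c algebra_simps sum_distrib_left)
qed

lemma polys_mult_aff:
  assumes "f \<in> polys n"
  shows "(\<lambda>p. (\<alpha> * fst p + \<beta> * snd p + \<gamma>) * f p) \<in> polys (Suc n)"
proof -
  have 1: "(\<lambda>p. \<alpha> * (fst p * f p)) \<in> polys (Suc n)"
    using polys_scale[OF polys_mult_x[OF assms]] .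
  have 2: "(\<lambda>p. \<beta> * (snd p * f p)) \<in> polys (Suc n)"
    using polys_scale[OF polys_mult_y[OF assms]] .
  have 3: "(\<lambda>p. \<gamma> * f p) \<in> polys (Suc n)"
    using polys_scale[OF polys_mono[OF assms]] by simp
  have "(\<lambda>p. \<alpha> * (fst p * f p) + \<beta> * (snd p * f p) + \<gamma> * f p) \<in> polys (Suc n)"
    by (intro polys_add 1 2 3)
  thus ?thesis by (simp add: algebra_simps)
qed

lemma polys_sum:
  assumes "\<And>e. e \<in> A \<Longrightarrow> F e \<in> polys n"
  shows "(\<lambda>p. \<Sum>e\<in>A. F e p) \<in> polys n"
  using assms
proof (induction A rule: infinite_finite_induct)
  case (infinite A) then show ?case by (simp add: polys_zero)
next
  case empty then show ?case by (simp add: polys_zero)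
next
  case (insert x F) then show ?case by (simp add: polys_add)
qed

lemma polys_diff:
  assumes "f \<in> polys n" "g \<in> polys n"
  shows "(\<lambda>p. f p - g p) \<in> polys n"
  using polys_add[OF assms(1) polys_scale[OF assms(2), of "-1"]] by simp



inductive zs :: "pt \<Rightarrow> nat \<Rightarrow> nat \<Rightarrow> (pt \<Rightarrow> real) \<Rightarrow> bool" for v where
  z_const: "zs v 0 n (\<lambda>p. c)"
| z_zero: "zs v k n (\<lambda>p. 0)"
| z_add: "zs v k n f \<Longrightarrow> zs v k n g \<Longrightarrow> zs v k n (\<lambda>p. f p + g p)"
| z_scale: "zs v k n f \<Longrightarrow> zs v k n (\<lambda>p. a * f p)"
| z_lin: "zs v k n f \<Longrightarrow> zs v (Suc k) (Suc n) (\<lambda>p. (\<alpha> * (fst p - fst v) + \<beta> * (snd p - snd v)) * f p)"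
| z_aff: "zs v k n f \<Longrightarrow> zs v k (Suc n) (\<lambda>p. (\<alpha> * fst p + \<beta> * snd p + \<gamma>) * f p)"
| z_down: "zs v (Suc k) n f \<Longrightarrow> zs v k n f"

lemma zs_polys: "zs v k n f \<Longrightarrow> f \<in> polys n"
proof (induction rule: zs.induct)
  case (z_lin k n f \<alpha> \<beta>)
  have "(\<lambda>p. (\<alpha> * fst p + \<beta> * snd p + (- \<alpha> * fst v - \<beta> * snd v)) * f p) \<in> polys (Suc n)"
    by (rule polys_mult_aff[OF z_lin.IH])
  moreover have "(\<lambda>p. (\<alpha> * fst p + \<beta> * snd p + (- \<alpha> * fst v - \<beta> * snd v)) * f p)
     = (\<lambda>p. (\<alpha> * (fst p - fst v) + \<beta> * (snd p - snd v)) * f p)"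
    by (rule ext) (simp add: algebra_simps)
  ultimately show ?case by simp
qed (auto intro: polys_const polys_add polys_scale polys_mult_aff)

lemma zs_sum: "(\<And>e. e \<in> A \<Longrightarrow> zs v k n (F e)) \<Longrightarrow> zs v k n (\<lambda>p. \<Sum>e\<in>A. F e p)"
proof (induction A rule: infinite_finite_induct)
  case (infinite A) then show ?case by (simp add: z_zero)
next
  case empty then show ?case by (simp add: z_zero)
next
  case (insert x F) then show ?case by (simp add: z_add)
qed

lemma zs_diff: "zs v k n f \<Longrightarrow> zs v k n g \<Longrightarrow> zs v k n (\<lambda>p. f p - g p)"
  using z_add[OF _ z_scale[of v k n g "-1"]] by simp

definition la :: "pt \<Rightarrow> pt \<Rightarrow> pt \<Rightarrow> pt \<Rightarrow> real" where
  "la a b c p = det2 (b - p) (c - p) / det2 (b - a) (c - a)"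
definition lb :: "pt \<Rightarrow> pt \<Rightarrow> pt \<Rightarrow> pt \<Rightarrow> real" where
  "lb a b c p = det2 (c - p) (a - p) / det2 (b - a) (c - a)"
definition lc :: "pt \<Rightarrow> pt \<Rightarrow> pt \<Rightarrow> pt \<Rightarrow> real" where
  "lc a b c p = det2 (a - p) (b - p) / det2 (b - a) (c - a)"

lemma bary_sum:
  assumes "det2 (b - a) (c - a) \<noteq> 0"
  shows "la a b c p + lb a b c p + lc a b c p = 1"
  using assms unfolding la_def lb_def lc_def det2_def
  by (simp add: divide_simps) (simp add: algebra_simps)

lemma bary_x:
  assumes "det2 (b - a) (c - a) \<noteq> 0"
  shows "fst p = fst a * la a b c p + fst b * lb a b c p + fst c * lc a b c p"
  using assms unfolding la_def lb_def lc_def det2_def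
  by (simp add: divide_simps) (simp add: algebra_simps)

lemma bary_y:
  assumes "det2 (b - a) (c - a) \<noteq> 0"
  shows "snd p = snd a * la a b c p + snd b * lb a b c p + snd c * lc a b c p"
  using assms unfolding la_def lb_def lc_def det2_def
  by (simp add: divide_simps) (simp add: algebra_simps)



lemma det2_id1: "det2 (v - p) (w - p) = (- (snd w - snd v)) * (fst p - fst v) + (fst w - fst v) * (snd p - snd v)"
  unfolding det2_def by (simp add: algebra_simps)
lemma det2_id2: "det2 (v - p) (w - p) = (snd v - snd w) * (fst p - fst w) + (- (fst v - fst w)) * (snd p - snd w)"
  unfolding det2_def by (simp add: algebra_simps)
lemma det2_id3: "det2 (v - p) (w - p) = (snd v - snd w) * fst p + (fst w - fst v) * snd p + (fst v * snd w - snd v * fst w)"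
  unfolding det2_def by (simp add: algebra_simps)

lemma det2_vanish_form:
  "\<exists>\<alpha> \<beta>. \<forall>p. det2 (v - p) (w - p) / D = \<alpha> * (fst p - fst v) + \<beta> * (snd p - snd v)"
  by (rule exI[of _ "- (snd w - snd v) / D"], rule exI[of _ "(fst w - fst v) / D"])
     (simp only: det2_id1 add_divide_distrib times_divide_eq_left, simp)

lemma det2_vanish_form2:
  "\<exists>\<alpha> \<beta>. \<forall>p. det2 (v - p) (w - p) / D = \<alpha> * (fst p - fst w) + \<beta> * (snd p - snd w)"
  by (rule exI[of _ "(snd v - snd w) / D"], rule exI[of _ "- (fst v - fst w) / D"])
     (simp only: det2_id2 add_divide_distrib times_divide_eq_left, simp)

lemma det2_aff_form:
  "\<exists>\<alpha> \<beta> \<gamma>. \<forall>p. det2 (v - p) (w - p) / D = \<alpha> * fst p + \<beta> * snd p + \<gamma>"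
  by (rule exI[of _ "(snd v - snd w) / D"], rule exI[of _ "(fst w - fst v) / D"],
      rule exI[of _ "(fst v * snd w - snd v * fst w) / D"])
     (simp only: det2_id3 add_divide_distrib times_divide_eq_left, simp)



lemma zs_lin_gen:
  assumes "zs v k n f" "\<And>p. L p = \<alpha> * (fst p - fst v) + \<beta> * (snd p - snd v)"
  shows "zs v (Suc k) (Suc n) (\<lambda>p. L p * f p)"
proof -
  have "(\<lambda>p. L p * f p) = (\<lambda>p. (\<alpha> * (fst p - fst v) + \<beta> * (snd p - snd v)) * f p)"
    using assms(2) by auto
  thus ?thesis using z_lin[OF assms(1), of \<alpha> \<beta>] by simp
qed

lemma zs_aff_gen:
  assumes "zs v k n f" "\<And>p. L p = \<alpha> * fst p + \<beta> * snd p + \<gamma>"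
  shows "zs v k (Suc n) (\<lambda>p. L p * f p)"
proof -
  have "(\<lambda>p. L p * f p) = (\<lambda>p. (\<alpha> * fst p + \<beta> * snd p + \<gamma>) * f p)"
    using assms(2) by auto
  thus ?thesis using z_aff[OF assms(1), of \<alpha> \<beta> \<gamma>] by simp
qed

lemma zs_det_vanish1: "zs v k n f \<Longrightarrow> zs v (Suc k) (Suc n) (\<lambda>p. det2 (v - p) (w - p) / D * f p)"
proof -
  assume a: "zs v k n f"
  obtain \<alpha> \<beta> where "\<forall>p. det2 (v - p) (w - p) / D = \<alpha> * (fst p - fst v) + \<beta> * (snd p - snd v)"
    using det2_vanish_form by blast
  then show ?thesis using zs_lin_gen[OF a, of "\<lambda>p. det2 (v - p) (w - p) / D"] by blast
qed
lemma zs_det_vanish2: "zs w k n f \<Longrightarrow> zs w (Suc k) (Suc n) (\<lambda>p. det2 (v - p) (w - p) / D * f p)"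
proof -
  assume a: "zs w k n f"
  obtain \<alpha> \<beta> where "\<forall>p. det2 (v - p) (w - p) / D = \<alpha> * (fst p - fst w) + \<beta> * (snd p - snd w)"
    using det2_vanish_form2 by blast
  then show ?thesis using zs_lin_gen[OF a, of "\<lambda>p. det2 (v - p) (w - p) / D"] by blast
qed
lemma zs_det_aff: "zs u k n f \<Longrightarrow> zs u k (Suc n) (\<lambda>p. det2 (v - p) (w - p) / D * f p)"
proof -
  assume a: "zs u k n f"
  obtain \<alpha> \<beta> \<gamma> where "\<forall>p. det2 (v - p) (w - p) / D = \<alpha> * fst p + \<beta> * snd p + \<gamma>"
    using det2_aff_form by blast
  then show ?thesis using zs_aff_gen[OF a, of "\<lambda>p. det2 (v - p) (w - p) / D"] by blast
qed



inductive lam :: "pt \<Rightarrow> pt \<Rightarrow> pt \<Rightarrow> nat \<Rightarrow> (pt \<Rightarrow> real) \<Rightarrow> bool" for a b c where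
  l_const: "lam a b c 0 (\<lambda>p. d)"
| l_add: "lam a b c n f \<Longrightarrow> lam a b c n g \<Longrightarrow> lam a b c n (\<lambda>p. f p + g p)"
| l_scale: "lam a b c n f \<Longrightarrow> lam a b c n (\<lambda>p. d * f p)"
| l_A: "lam a b c n f \<Longrightarrow> lam a b c (Suc n) (\<lambda>p. la a b c p * f p)"
| l_B: "lam a b c n f \<Longrightarrow> lam a b c (Suc n) (\<lambda>p. lb a b c p * f p)"
| l_C: "lam a b c n f \<Longrightarrow> lam a b c (Suc n) (\<lambda>p. lc a b c p * f p)"

lemma la_aff: "zs u k n f \<Longrightarrow> zs u k (Suc n) (\<lambda>p. la a b c p * f p)"
  unfolding la_def by (rule zs_det_aff)
lemma lb_aff: "zs u k n f \<Longrightarrow> zs u k (Suc n) (\<lambda>p. lb a b c p * f p)"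
  unfolding lb_def by (rule zs_det_aff)
lemma lc_aff: "zs u k n f \<Longrightarrow> zs u k (Suc n) (\<lambda>p. lc a b c p * f p)"
  unfolding lc_def by (rule zs_det_aff)
lemma la_b: "zs b k n f \<Longrightarrow> zs b (Suc k) (Suc n) (\<lambda>p. la a b c p * f p)"
  unfolding la_def by (rule zs_det_vanish1)
lemma la_c: "zs c k n f \<Longrightarrow> zs c (Suc k) (Suc n) (\<lambda>p. la a b c p * f p)"
  unfolding la_def by (rule zs_det_vanish2)
lemma lb_c: "zs c k n f \<Longrightarrow> zs c (Suc k) (Suc n) (\<lambda>p. lb a b c p * f p)"
  unfolding lb_def by (rule zs_det_vanish1)
lemma lb_a: "zs a k n f \<Longrightarrow> zs a (Suc k) (Suc n) (\<lambda>p. lb a b c p * f p)"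
  unfolding lb_def by (rule zs_det_vanish2)
lemma lc_a: "zs a k n f \<Longrightarrow> zs a (Suc k) (Suc n) (\<lambda>p. lc a b c p * f p)"
  unfolding lc_def by (rule zs_det_vanish1)
lemma lc_b: "zs b k n f \<Longrightarrow> zs b (Suc k) (Suc n) (\<lambda>p. lc a b c p * f p)"
  unfolding lc_def by (rule zs_det_vanish2)

lemma lam_z0: "lam a b c n f \<Longrightarrow> zs v 0 n f"
  by (induction rule: lam.induct) (auto intro: z_const z_add z_scale la_aff lb_aff lc_aff)

lemma lam_decomp:
  assumes "lam a b c n f"
  shows "\<alpha> + \<beta> + \<gamma> \<le> 2 * n + 2 \<Longrightarrow> \<exists>A B C. zs a \<alpha> n A \<and> zs b \<beta> n B \<and> zs c \<gamma> n C \<and> (\<forall>p. f p = A p + B p + C p)"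
  using assms
proof (induction arbitrary: \<alpha> \<beta> \<gamma> rule: lam.induct)
  case (l_const d)
  then consider "\<alpha> = 0" | "\<beta> = 0" | "\<gamma> = 0" by linarith
  then show ?case
  proof cases
    case 1 then show ?thesis by (intro exI[of _ "\<lambda>p. d"] exI[of _ "\<lambda>p. 0"]) (auto intro: z_const z_zero z_add z_scale)
  next
    case 2 then show ?thesis
      by (intro exI[of _ "\<lambda>p. 0"] exI[of _ "\<lambda>p. d"]) (auto intro: z_const z_zero z_add z_scale)
  next
    case 3 then show ?thesis
      by (intro exI[of _ "\<lambda>p. 0"]  exI[of _ "\<lambda>p. d"]) (auto intro: z_const z_zero z_add z_scale)
  qed
next
  case (l_add n f g)
  obtain A B C where 1: "zs a \<alpha> n A" "zs b \<beta> n B" "zs c \<gamma> n C" "\<forall>p. f p = A p + B p + C p"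
    using l_add.IH(1)[OF l_add.prems] by blast
  obtain A' B' C' where 2: "zs a \<alpha> n A'" "zs b \<beta> n B'" "zs c \<gamma> n C'" "\<forall>p. g p = A' p + B' p + C' p"
    using l_add.IH(2)[OF l_add.prems] by blast
  show ?case
    by (rule exI[of _ "\<lambda>p. A p + A' p"], rule exI[of _ "\<lambda>p. B p + B' p"], rule exI[of _ "\<lambda>p. C p + C' p"])
       (use 1 2 in \<open>auto intro: z_const z_zero z_add z_scale\<close>)
next
  case (l_scale n f d)
  obtain A B C where 1: "zs a \<alpha> n A" "zs b \<beta> n B" "zs c \<gamma> n C" "\<forall>p. f p = A p + B p + C p"
    using l_scale.IH[OF l_scale.prems] by blast
  show ?case
    by (rule exI[of _ "\<lambda>p. d * A p"], rule exI[of _ "\<lambda>p. d * B p"], rule exI[of _ "\<lambda>p. d * C p"])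
       (use 1 in \<open>auto intro: z_const z_zero z_add z_scale simp: algebra_simps\<close>)
next
  case (l_A n f)
  have L: "lam a b c (Suc n) (\<lambda>p. la a b c p * f p)" using l_A.hyps by (rule lam.l_A)
  show ?case
  proof (cases "\<beta> = 0 \<or> \<gamma> = 0")
    case True
    then show ?thesis
    proof
      assume "\<beta> = 0"
      then show ?thesis using lam_z0[OF L, of b]
        by (intro exI[of _ "\<lambda>p. 0"] exI[of _ "\<lambda>p. la a b c p * f p"]) (auto intro: z_const z_zero z_add z_scale)
    next
      assume "\<gamma> = 0"
      then show ?thesis using lam_z0[OF L, of c]
        by (intro exI[of _ "\<lambda>p. 0"] exI[of _ "\<lambda>p. la a b c p * f p"]) (auto intro: z_const z_zero z_add z_scale)
    qed
  next
    case False
    then obtain \<beta>' \<gamma>' where b: "\<beta> = Suc \<beta>'" and g: "\<gamma> = Suc \<gamma>'" by (metis not0_implies_Suc)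
    obtain A B C where 1: "zs a \<alpha> n A" "zs b \<beta>' n B" "zs c \<gamma>' n C" "\<forall>p. f p = A p + B p + C p"
      using l_A.IH[of \<alpha> \<beta>' \<gamma>'] l_A.prems b g by auto
    show ?thesis
      apply (rule exI[of _ "\<lambda>p. la a b c p * A p"], rule exI[of _ "\<lambda>p. la a b c p * B p"], rule exI[of _ "\<lambda>p. la a b c p * C p"])
      using 1 b g 
      by (auto intro!: la_aff la_b la_c simp: distrib_left)
  qed
next
  case (l_B n f)
  have L: "lam a b c (Suc n) (\<lambda>p. lb a b c p * f p)" using l_B.hyps by (rule lam.l_B)
  show ?case
  proof (cases "\<alpha> = 0 \<or> \<gamma> = 0")
    case True
    then show ?thesis
    proof
      assume "\<alpha> = 0"
      then show ?thesis using lam_z0[OF L, of a]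
        by (intro exI[of _ "\<lambda>p. lb a b c p * f p"] exI[of _ "\<lambda>p. 0"]) (auto intro: z_const z_zero z_add z_scale)
    next
      assume "\<gamma> = 0"
      then show ?thesis using lam_z0[OF L, of c]
        by (intro exI[of _ "\<lambda>p. 0"] exI[of _ "\<lambda>p. lb a b c p * f p"]) (auto intro: z_const z_zero z_add z_scale)
    qed
  next
    case False
    then obtain \<alpha>' \<gamma>' where b: "\<alpha> = Suc \<alpha>'" and g: "\<gamma> = Suc \<gamma>'" by (metis not0_implies_Suc)
    obtain A B C where 1: "zs a \<alpha>' n A" "zs b \<beta> n B" "zs c \<gamma>' n C" "\<forall>p. f p = A p + B p + C p"
      using l_B.IH[of \<alpha>' \<beta> \<gamma>'] l_B.prems b g by auto
    show ?thesis
      apply (rule exI[of _ "\<lambda>p. lb a b c p * A p"], rule exI[of _ "\<lambda>p. lb a b c p * B p"], rule exI[of _ "\<lambda>p. lb a b c p * C p"])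
      using 1 b g 
      by (auto intro!: lb_aff lb_a lb_c simp: distrib_left)
  qed
next
  case (l_C n f)
  have L: "lam a b c (Suc n) (\<lambda>p. lc a b c p * f p)" using l_C.hyps by (rule lam.l_C)
  show ?case
  proof (cases "\<alpha> = 0 \<or> \<beta> = 0")
    case True
    then show ?thesis
    proof
      assume "\<alpha> = 0"
      then show ?thesis using lam_z0[OF L, of a]
        by (intro exI[of _ "\<lambda>p. lc a b c p * f p"] exI[of _ "\<lambda>p. 0"]) (auto intro: z_const z_zero z_add z_scale)
    next
      assume "\<beta> = 0"
      then show ?thesis using lam_z0[OF L, of b]
        by (intro exI[of _ "\<lambda>p. 0"] exI[of _ "\<lambda>p. lc a b c p * f p"]) (auto intro: z_const z_zero z_add z_scale)
    qed
  next
    case False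
    then obtain \<alpha>' \<beta>' where b: "\<alpha> = Suc \<alpha>'" and g: "\<beta> = Suc \<beta>'" by (metis not0_implies_Suc)
    obtain A B C where 1: "zs a \<alpha>' n A" "zs b \<beta>' n B" "zs c \<gamma> n C" "\<forall>p. f p = A p + B p + C p"
      using l_C.IH[of \<alpha>' \<beta>' \<gamma>] l_C.prems b g by auto
    show ?thesis
      apply (rule exI[of _ "\<lambda>p. lc a b c p * A p"], rule exI[of _ "\<lambda>p. lc a b c p * B p"], rule exI[of _ "\<lambda>p. lc a b c p * C p"])
      using 1 b g 
      by (auto intro!: lc_aff lc_a lc_b simp: distrib_left)
  qed
qed



context
  fixes a b c :: pt
  assumes nd: "det2 (b - a) (c - a) \<noteq> 0"
begin

lemma lam_up: "lam a b c n f \<Longrightarrow> lam a b c (Suc n) f"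
proof -
  assume f: "lam a b c n f"
  have "lam a b c (Suc n) (\<lambda>p. la a b c p * f p + lb a b c p * f p + lc a b c p * f p)"
    by (intro l_add l_A l_B l_C f)
  moreover have "(\<lambda>p. la a b c p * f p + lb a b c p * f p + lc a b c p * f p) = f"
  proof
    fix p
    have "la a b c p * f p + lb a b c p * f p + lc a b c p * f p
        = (la a b c p + lb a b c p + lc a b c p) * f p" by (simp add: algebra_simps)
    also have "\<dots> = f p" using bary_sum[OF nd] by simp
    finally show "la a b c p * f p + lb a b c p * f p + lc a b c p * f p = f p" .
  qed
  ultimately show ?thesis by simp
qed

lemma lam_x: "lam a b c n f \<Longrightarrow> lam a b c (Suc n) (\<lambda>p. fst p * f p)"
proof -
  assume f: "lam a b c n f"
  have "lam a b c (Suc n) (\<lambda>p. fst a * (la a b c p * f p) + fst b * (lb a b c p * f p) + fst c * (lc a b c p * f p))"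
    by (intro l_add l_scale l_A l_B l_C f)
  moreover have "(\<lambda>p. fst a * (la a b c p * f p) + fst b * (lb a b c p * f p) + fst c * (lc a b c p * f p)) = (\<lambda>p. fst p * f p)"
  proof
    fix p
    have "fst a * (la a b c p * f p) + fst b * (lb a b c p * f p) + fst c * (lc a b c p * f p)
        = (fst a * la a b c p + fst b * lb a b c p + fst c * lc a b c p) * f p" by (simp add: algebra_simps)
    also have "\<dots> = fst p * f p" using bary_x[OF nd, of p] by simp
    finally show "fst a * (la a b c p * f p) + fst b * (lb a b c p * f p) + fst c * (lc a b c p * f p) = fst p * f p" .
  qed
  ultimately show ?thesis by simp
qed

lemma lam_y: "lam a b c n f \<Longrightarrow> lam a b c (Suc n) (\<lambda>p. snd p * f p)"
proof -
  assume f: "lam a b c n f"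
  have "lam a b c (Suc n) (\<lambda>p. snd a * (la a b c p * f p) + snd b * (lb a b c p * f p) + snd c * (lc a b c p * f p))"
    by (intro l_add l_scale l_A l_B l_C f)
  moreover have "(\<lambda>p. snd a * (la a b c p * f p) + snd b * (lb a b c p * f p) + snd c * (lc a b c p * f p)) = (\<lambda>p. snd p * f p)"
  proof
    fix p
    have "snd a * (la a b c p * f p) + snd b * (lb a b c p * f p) + snd c * (lc a b c p * f p)
        = (snd a * la a b c p + snd b * lb a b c p + snd c * lc a b c p) * f p" by (simp add: algebra_simps)
    also have "\<dots> = snd p * f p" using bary_y[OF nd, of p] by simp
    finally show "snd a * (la a b c p * f p) + snd b * (lb a b c p * f p) + snd c * (lc a b c p * f p) = snd p * f p" .
  qed
  ultimately show ?thesis by simp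
qed

lemma lam_mono: "n \<le> n' \<Longrightarrow> lam a b c n f \<Longrightarrow> lam a b c n' f"
  by (induction n' rule: dec_induct) (auto intro: lam_up)

lemma lam_mon: "lam a b c (i + j) (\<lambda>p. fst p ^ i * snd p ^ j)"
proof (induction i)
  case 0
  show ?case
  proof (induction j)
    case 0 show ?case using l_const[of a b c 1] by simp
  next
    case (Suc j) show ?case using lam_y[OF Suc] by (simp add: algebra_simps)
  qed
next
  case (Suc i) show ?case using lam_x[OF Suc] by (simp add: algebra_simps)
qed

lemma lam_zero: "lam a b c n (\<lambda>p. 0)"
  using lam_mono[of 0 n "\<lambda>p. 0"] l_const[of a b c 0] by simp

lemma lam_sum: "(\<And>e. e \<in> A \<Longrightarrow> lam a b c n (F e)) \<Longrightarrow> lam a b c n (\<lambda>p. \<Sum>e\<in>A. F e p)"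
proof (induction A rule: infinite_finite_induct)
  case (infinite A) then show ?case by (simp add: lam_zero)
next
  case empty then show ?case by (simp add: lam_zero)
next
  case (insert x F) then show ?case by (simp add: l_add)
qed

lemma polys_lam: "f \<in> polys m \<Longrightarrow> lam a b c m f"
proof -
  assume fm: "f \<in> polys m"
  obtain cf where cf: "\<And>p. f p = (\<Sum>k\<in>dd m. cf k * fst p ^ fst k * snd p ^ snd k)"
    using polys_elim[OF fm] by blast
  have "lam a b c m (\<lambda>p. \<Sum>k\<in>dd m. cf k * (fst p ^ fst k * snd p ^ snd k))"
  proof (rule lam_sum)
    fix k assume "k \<in> dd m"
    then have "fst k + snd k \<le> m" by (cases k) auto
    then show "lam a b c m (\<lambda>p. cf k * (fst p ^ fst k * snd p ^ snd k))"
      by (intro l_scale lam_mono[OF _ lam_mon])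
  qed
  moreover have "(\<lambda>p. \<Sum>k\<in>dd m. cf k * (fst p ^ fst k * snd p ^ snd k)) = f"
    by (rule ext) (simp add: cf mult.assoc)
  ultimately show ?thesis by simp
qed

lemma decomp:
  assumes "f \<in> polys m" "\<alpha> + \<beta> + \<gamma> \<le> 2 * m + 2"
  shows "\<exists>A B C. zs a \<alpha> m A \<and> zs b \<beta> m B \<and> zs c \<gamma> m C \<and> (\<forall>p. f p = A p + B p + C p)"
  using lam_decomp[OF polys_lam[OF assms(1)] assms(2)] .

end



lemma polys_mult_affg:
  assumes "f \<in> polys n" "\<And>p. L p = \<alpha> * fst p + \<beta> * snd p + \<gamma>"
  shows "(\<lambda>p. L p * f p) \<in> polys (Suc n)"
proof -
  have "(\<lambda>p. L p * f p) = (\<lambda>p. (\<alpha> * fst p + \<beta> * snd p + \<gamma>) * f p)"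
    using assms(2) by auto
  thus ?thesis using polys_mult_aff[OF assms(1)] by simp
qed

definition Xs :: "real \<Rightarrow> pt \<Rightarrow> pt \<Rightarrow> real" where
  "Xs s v p = (fst p - fst v) - s * (snd p - snd v)"
definition Ys :: "pt \<Rightarrow> pt \<Rightarrow> real" where
  "Ys v p = snd p - snd v"

lemma Xs_aff: "Xs s v p = 1 * fst p + (- s) * snd p + (s * snd v - fst v)"
  unfolding Xs_def by (simp add: algebra_simps)
lemma Ys_aff: "Ys v p = 0 * fst p + 1 * snd p + (- snd v)"
  unfolding Ys_def by (simp add: algebra_simps)

lemma polys_Xs: "f \<in> polys n \<Longrightarrow> (\<lambda>p. Xs s v p * f p) \<in> polys (Suc n)"
  by (rule polys_mult_affg, assumption, rule Xs_aff)
lemma polys_Ys: "f \<in> polys n \<Longrightarrow> (\<lambda>p. Ys v p * f p) \<in> polys (Suc n)"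
  by (rule polys_mult_affg, assumption, rule Ys_aff)

definition hrep :: "real \<Rightarrow> pt \<Rightarrow> nat \<Rightarrow> (nat \<Rightarrow> pt \<Rightarrow> real) \<Rightarrow> pt \<Rightarrow> real" where
  "hrep s v k g p = (\<Sum>j\<le>k. Xs s v p ^ j * Ys v p ^ (k - j) * g j p)"

lemma hrep_lin:
  "(\<alpha> * (fst p - fst v) + \<beta> * (snd p - snd v)) * hrep s v k g p
   = hrep s v (Suc k) (\<lambda>j p. (if j = 0 then 0 else \<alpha> * g (j - 1) p) + (if j \<le> k then (\<alpha> * s + \<beta>) * g j p else 0)) p"
proof -
  let ?X = "Xs s v p" and ?Y = "Ys v p"
  have L: "\<alpha> * (fst p - fst v) + \<beta> * (snd p - snd v) = \<alpha> * ?X + (\<alpha> * s + \<beta>) * ?Y"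
    unfolding Xs_def Ys_def by (simp add: algebra_simps)
  have 1: "(\<Sum>j\<le>Suc k. ?X ^ j * ?Y ^ (Suc k - j) * (if j = 0 then 0 else \<alpha> * g (j - 1) p))
        = \<alpha> * ?X * hrep s v k g p"
    unfolding hrep_def sum.atMost_Suc_shift
    by (simp add: sum_distrib_left algebra_simps)
  have 2: "(\<Sum>j\<le>Suc k. ?X ^ j * ?Y ^ (Suc k - j) * (if j \<le> k then (\<alpha> * s + \<beta>) * g j p else 0))
        = (\<alpha> * s + \<beta>) * ?Y * hrep s v k g p"
    unfolding hrep_def sum.atMost_Suc
    by (auto simp: sum_distrib_left algebra_simps Suc_diff_le intro!: sum.cong)
  show ?thesis
    unfolding L
    apply (subst hrep_def[of _ _ "Suc k"])
    by (simp only: distrib_left sum.distrib 1 2) (simp add: algebra_simps)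
qed

lemma hrep_down:
  "hrep s v (Suc k) g p
   = hrep s v k (\<lambda>j p. Ys v p * g j p + (if j = k then Xs s v p * g (Suc k) p else 0)) p"
proof -
  let ?X = "Xs s v p" and ?Y = "Ys v p"
  have "hrep s v (Suc k) g p = (\<Sum>j\<le>k. ?X ^ j * ?Y ^ (Suc k - j) * g j p) + ?X ^ Suc k * g (Suc k) p"
    unfolding hrep_def by simp
  also have "(\<Sum>j\<le>k. ?X ^ j * ?Y ^ (Suc k - j) * g j p) = (\<Sum>j\<le>k. ?X ^ j * ?Y ^ (k - j) * (?Y * g j p))"
    by (intro sum.cong) (auto simp: Suc_diff_le algebra_simps)
  also have "?X ^ Suc k * g (Suc k) p = (\<Sum>j\<le>k. ?X ^ j * ?Y ^ (k - j) * (if j = k then ?X * g (Suc k) p else 0))"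
    by (simp add: if_distrib sum.delta' algebra_simps cong: if_cong)
  finally show ?thesis unfolding hrep_def by (simp add: sum.distrib[symmetric] algebra_simps)
qed

lemma zs_rep:
  assumes "zs v k n f"
  shows "(\<forall>p. f p = 0) \<or> (k \<le> n \<and> (\<exists>g. (\<forall>j\<le>k. g j \<in> polys (n - k)) \<and> (\<forall>p. f p = hrep s v k g p)))"
  using assms
proof (induction rule: zs.induct)
  case (z_const n c)
  show ?case
    by (rule disjI2, intro conjI exI[of _ "\<lambda>j p. c"]) (auto simp: hrep_def polys_const)
next
  case (z_zero k n) then show ?case by simp
next
  case (z_add k n f g)
  show ?case
  proof (cases "\<forall>p. f p = 0")
    case True then show ?thesis using z_add.IH(2) by simp
  next
    case False
    then obtain g1 where g1: "k \<le> n" "\<forall>j\<le>k. g1 j \<in> polys (n - k)" "\<forall>p. f p = hrep s v k g1 p"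
      using z_add.IH(1) by blast
    show ?thesis
    proof (cases "\<forall>p. g p = 0")
      case True then show ?thesis using z_add.IH(1) by simp
    next
      case False
      then obtain g2 where g2: "\<forall>j\<le>k. g2 j \<in> polys (n - k)" "\<forall>p. g p = hrep s v k g2 p"
        using z_add.IH(2) by blast
      show ?thesis
        by (rule disjI2, intro conjI exI[of _ "\<lambda>j p. g1 j p + g2 j p"])
           (use g1 g2 in \<open>auto simp: hrep_def polys_add sum.distrib algebra_simps\<close>)
    qed
  qed
next
  case (z_scale k n f a)
  show ?case
  proof (cases "\<forall>p. f p = 0")
    case True then show ?thesis by simp
  next
    case False
    then obtain g1 where g1: "k \<le> n" "\<forall>j\<le>k. g1 j \<in> polys (n - k)" "\<forall>p. f p = hrep s v k g1 p"
      using z_scale.IH(1) by blast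
    show ?thesis
      by (rule disjI2, intro conjI exI[of _ "\<lambda>j p. a * g1 j p"])
         (use g1 in \<open>auto simp: hrep_def polys_scale sum_distrib_left algebra_simps\<close>)
  qed
next
  case (z_lin k n f \<alpha> \<beta>)
  show ?case
  proof (cases "\<forall>p. f p = 0")
    case True then show ?thesis by simp
  next
    case False
    then obtain g1 where g1: "k \<le> n" "\<forall>j\<le>k. g1 j \<in> polys (n - k)" "\<forall>p. f p = hrep s v k g1 p"
      using z_lin.IH(1) by blast
    have P: "(\<lambda>p. (if j = 0 then 0 else \<alpha> * g1 (j - 1) p) + (if j \<le> k then (\<alpha> * s + \<beta>) * g1 j p else 0)) \<in> polys (Suc n - Suc k)"
      if "j \<le> Suc k" for j
    proof (rule polys_add)
      show "(\<lambda>p. if j = 0 then 0 else \<alpha> * g1 (j - 1) p) \<in> polys (Suc n - Suc k)"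
        using that g1(2) by (cases "j = 0") (auto intro!: polys_scale polys_zero)
      show "(\<lambda>p. if j \<le> k then (\<alpha> * s + \<beta>) * g1 j p else 0) \<in> polys (Suc n - Suc k)"
        using that g1(2) by (cases "j \<le> k") (auto intro!: polys_scale polys_zero)
    qed
    show ?thesis
      by (rule disjI2, intro conjI exI[of _ "\<lambda>j p. (if j = 0 then 0 else \<alpha> * g1 (j - 1) p) + (if j \<le> k then (\<alpha> * s + \<beta>) * g1 j p else 0)"])
         (use g1 P in \<open>simp_all del: split_paired_All add: hrep_lin\<close>)
  qed
next
  case (z_aff k n f \<alpha> \<beta> \<gamma>)
  show ?case
  proof (cases "\<forall>p. f p = 0")
    case True then show ?thesis by simp
  next
    case False
    then obtain g1 where g1: "k \<le> n" "\<forall>j\<le>k. g1 j \<in> polys (n - k)" "\<forall>p. f p = hrep s v k g1 p"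
      using z_aff.IH(1) by blast
    have P: "(\<lambda>p. (\<alpha> * fst p + \<beta> * snd p + \<gamma>) * g1 j p) \<in> polys (Suc n - k)" if "j \<le> k" for j
      using polys_mult_aff[OF g1(2)[rule_format, OF that]] g1(1) by (simp add: Suc_diff_le)
    show ?thesis
      by (rule disjI2, intro conjI exI[of _ "\<lambda>j p. (\<alpha> * fst p + \<beta> * snd p + \<gamma>) * g1 j p"])
         (use g1 P in \<open>simp_all del: split_paired_All add: hrep_def sum_distrib_left ac_simps\<close>)
  qed
next
  case (z_down k n f)
  show ?case
  proof (cases "\<forall>p. f p = 0")
    case True then show ?thesis by simp
  next
    case False
    then obtain g1 where g1: "Suc k \<le> n" "\<forall>j\<le>Suc k. g1 j \<in> polys (n - Suc k)" "\<forall>p. f p = hrep s v (Suc k) g1 p"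
      using z_down.IH(1) by blast
    have P: "(\<lambda>p. Ys v p * g1 j p + (if j = k then Xs s v p * g1 (Suc k) p else 0)) \<in> polys (n - k)" if "j \<le> k" for j
    proof -
      have e: "n - k = Suc (n - Suc k)" using g1(1) by simp
      show ?thesis unfolding e using that g1(2)
        by (cases "j = k") (auto intro!: polys_add polys_Xs polys_Ys polys_zero)
    qed
    show ?thesis
      by (rule disjI2, intro conjI exI[of _ "\<lambda>j p. Ys v p * g1 j p + (if j = k then Xs s v p * g1 (Suc k) p else 0)"])
         (use g1 P in \<open>simp_all del: split_paired_All add: hrep_down\<close>)
  qed
qed



definition lagr :: "real set \<Rightarrow> real \<Rightarrow> real poly" where
  "lagr S l = smult (inverse (\<Prod>\<mu>\<in>S-{l}. (l - \<mu>))) (\<Prod>\<mu>\<in>S-{l}. [:-\<mu>, 1:])"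

lemma poly_lagr:
  assumes "finite S" "l \<in> S" "x \<in> S"
  shows "poly (lagr S l) x = (if l = x then 1 else 0)"
proof (cases "l = x")
  case True
  have "(\<Prod>\<mu>\<in>S-{l}. (l - \<mu>)) \<noteq> 0" using assms(1) by (simp add: prod_zero_iff)
  then show ?thesis using True by (simp add: lagr_def poly_prod)
next
  case False
  have "(\<Prod>\<mu>\<in>S-{l}. poly [:-\<mu>, 1:] x) = 0"
    using assms False by (intro prod_zero) (auto intro!: bexI[of _ x])
  then show ?thesis using False by (simp add: lagr_def poly_prod)
qed

lemma degree_lagr:
  assumes "finite S" "card S = Suc k" "l \<in> S"
  shows "degree (lagr S l) \<le> k"
proof -
  have "degree (\<Prod>\<mu>\<in>S-{l}. [:-\<mu>, 1:]) \<le> sum (degree \<circ> (\<lambda>\<mu>. [:-\<mu>, 1:])) (S - {l})"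
    by (rule degree_prod_sum_le) (use assms in auto)
  also have "\<dots> = card (S - {l})" by simp
  also have "\<dots> = k" using assms by simp
  finally show ?thesis unfolding lagr_def using degree_smult_le order_trans by blast
qed

lemma vander:
  fixes S :: "real set"
  assumes "finite S" "card S = Suc k" "j \<le> k"
  shows "\<exists>c. \<forall>i\<le>k. (\<Sum>l\<in>S. c l * l ^ i) = (if i = j then 1 else 0)"
proof (intro exI allI impI)
  fix i assume i: "i \<le> k"
  define Q where "Q = (\<Sum>l\<in>S. smult (l ^ i) (lagr S l))"
  have "Q = monom 1 i"
  proof (rule poly_eqI_degree[of S])
    fix x assume x: "x \<in> S"
    have "poly Q x = (\<Sum>l\<in>S. l ^ i * (if l = x then 1 else 0))"
      unfolding Q_def poly_sum using assms(1) x by (auto simp: poly_lagr intro!: sum.cong)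
    also have "\<dots> = x ^ i" using assms(1) x by (simp add: if_distrib cong: if_cong)
    finally show "poly Q x = poly (monom 1 i) x" by (simp add: poly_monom)
  next
    have "degree Q \<le> k" unfolding Q_def
      by (rule degree_sum_le) (use assms degree_lagr degree_smult_le order_trans in blast)+
    then show "degree Q < card S" using assms by simp
  next
    show "degree (monom (1::real) i) < card S" using assms i degree_monom_le[of "1::real" i] by simp
  qed
  then have "coeff Q j = (if i = j then 1 else 0)" by simp
  then show "(\<Sum>l\<in>S. coeff (lagr S l) j * l ^ i) = (if i = j then 1 else 0)"
    unfolding Q_def coeff_sum by (simp add: mult.commute)
qed

lemma forms_span:
  fixes S :: "real set"
  assumes "finite S" "card S = Suc k" "j \<le> k"
  shows "\<exists>c. \<forall>X Y. X ^ j * Y ^ (k - j) = (\<Sum>l\<in>S. c l * (Y + l * X) ^ k)"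
proof -
  obtain c0 where c0: "\<forall>i\<le>k. (\<Sum>l\<in>S. c0 l * l ^ i) = (if i = j then 1 else 0)"
    using vander[OF assms] by blast
  define B where "B = real (k choose j)"
  have B: "B \<noteq> 0" unfolding B_def using assms(3) by simp
  show ?thesis
  proof (intro exI allI)
    fix X Y :: real
    have "(\<Sum>l\<in>S. c0 l * (Y + l * X) ^ k) = (\<Sum>l\<in>S. c0 l * (\<Sum>i\<le>k. real (k choose i) * (l * X) ^ i * Y ^ (k - i)))"
    proof (intro sum.cong refl)
      fix l
      have "(Y + l * X) ^ k = (l * X + Y) ^ k" by (simp add: add.commute)
      then show "c0 l * (Y + l * X) ^ k = c0 l * (\<Sum>i\<le>k. real (k choose i) * (l * X) ^ i * Y ^ (k - i))"
        by (simp only: binomial_ring)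
    qed
    also have "\<dots> = (\<Sum>i\<le>k. real (k choose i) * X ^ i * Y ^ (k - i) * (\<Sum>l\<in>S. c0 l * l ^ i))"
      by (simp add: sum_distrib_left sum_distrib_right power_mult_distrib algebra_simps sum.swap[of _ S])
    also have "\<dots> = (\<Sum>i\<le>k. real (k choose i) * X ^ i * Y ^ (k - i) * (if i = j then 1 else 0))"
      using c0 by (intro sum.cong) auto
    also have "\<dots> = B * X ^ j * Y ^ (k - j)"
      using assms(3) by (simp add: B_def if_distrib cong: if_cong)
    finally have "(\<Sum>l\<in>S. c0 l * (Y + l * X) ^ k) = B * X ^ j * Y ^ (k - j)" .
    then have "X ^ j * Y ^ (k - j) = (\<Sum>l\<in>S. c0 l * (Y + l * X) ^ k) / B" using B by simp
    then show "X ^ j * Y ^ (k - j) = (\<Sum>l\<in>S. c0 l / B * (Y + l * X) ^ k)"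
      by (simp add: sum_divide_distrib)
  qed
qed



lemma span_par:
  fixes d d' :: pt
  assumes "d \<noteq> 0" "d' \<noteq> 0" "det2 d d' = 0"
  shows "span {d} = span {d'}"
proof -
  obtain c where c: "d' = c *\<^sub>R d"
  proof (cases "fst d = 0")
    case True
    then have "snd d \<noteq> 0" using assms(1) by (simp add: prod_eq_iff)
    moreover have "fst d' = 0" using assms(3) True \<open>snd d \<noteq> 0\<close> by (simp add: det2_def)
    ultimately show ?thesis using True
      by (intro that[of "snd d' / snd d"]) (simp add: prod_eq_iff)
  next
    case False
    have "snd d' = fst d' / fst d * snd d" using assms(3) False by (simp add: det2_def field_simps)
    then show ?thesis using False
      by (intro that[of "fst d' / fst d"]) (simp add: prod_eq_iff)
  qed
  have "c \<noteq> 0" using c assms(2) by auto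
  have "d = inverse c *\<^sub>R d'" using c \<open>c \<noteq> 0\<close> by simp
  show ?thesis unfolding span_eq
    using c \<open>d = inverse c *\<^sub>R d'\<close>
    by (metis insert_subset empty_subsetI span_base span_scale singletonI)
qed

lemma lexless_total: "p \<noteq> q \<Longrightarrow> lexless p q \<or> lexless q p"
  unfolding lexless_def by (auto simp: prod_eq_iff)

lemma lexless_asym: "lexless p q \<Longrightarrow> \<not> lexless q p"
  unfolding lexless_def by auto

lemma head_tail_lt:
  assumes "lexless p q"
  shows "ehead {p, q} = q \<and> etail {p, q} = p"
proof
  have pq: "p \<noteq> q" using assms unfolding lexless_def by auto
  have na: "\<not> lexless q p" using lexless_asym[OF assms] .
  show "ehead {p, q} = q" unfolding ehead_def
  proof (rule the_equality)
    show "q \<in> {p, q} \<and> (\<forall>v\<in>{p, q}. v \<noteq> q \<longrightarrow> lexless v q)" using assms by simp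
    fix u assume u: "u \<in> {p, q} \<and> (\<forall>v\<in>{p, q}. v \<noteq> u \<longrightarrow> lexless v u)"
    show "u = q"
    proof (rule ccontr)
      assume "u \<noteq> q" then have "u = p" using u by simp
      then have "lexless q p" using u pq by simp
      then show False using na by simp
    qed
  qed
  show "etail {p, q} = p" unfolding etail_def
  proof (rule the_equality)
    show "p \<in> {p, q} \<and> (\<forall>v\<in>{p, q}. v \<noteq> p \<longrightarrow> lexless p v)" using assms by simp
    fix u assume u: "u \<in> {p, q} \<and> (\<forall>v\<in>{p, q}. v \<noteq> u \<longrightarrow> lexless u v)"
    show "u = p"
    proof (rule ccontr)
      assume "u \<noteq> p" then have "u = q" using u by simp
      then have "lexless q p" using u pq by simp
      then show False using na by simp
    qed
  qed
qed

lemma head_tail: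
  assumes "p \<noteq> q"
  shows "(ehead {p, q} = q \<and> etail {p, q} = p) \<or> (ehead {p, q} = p \<and> etail {p, q} = q)"
  using lexless_total[OF assms] head_tail_lt[of p q] head_tail_lt[of q p]
  by (auto simp: insert_commute)

lemma lform_sign:
  assumes "p \<noteq> q"
  shows "\<exists>\<sigma>. (\<sigma> = 1 \<or> \<sigma> = -1) \<and> (\<forall>x. lform {p, q} x = \<sigma> * det2 (q - p) (x - p))"
proof -
  from head_tail[OF assms] show ?thesis
  proof
    assume "ehead {p, q} = q \<and> etail {p, q} = p"
    then show ?thesis by (intro exI[of _ 1]) (simp add: lform_def)
  next
    assume "ehead {p, q} = p \<and> etail {p, q} = q"
    then show ?thesis
      by (intro exI[of _ "-1"]) (simp add: lform_def det2_def algebra_simps)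
  qed
qed

lemma vsign_other:
  assumes "p \<noteq> q"
  shows "vsign q {p, q} = - vsign p {p, q}"
  using head_tail[OF assms] assms unfolding vsign_def by auto

lemma finite_edges: "planar_triangulation T \<Longrightarrow> finite (edges T)"
proof -
  assume pt: "planar_triangulation T"
  have fin: "finite T" "\<forall>\<sigma>\<in>T. finite \<sigma>" using pt unfolding planar_triangulation_def by auto
  have "edges T \<subseteq> (\<Union>\<sigma>\<in>T. Pow \<sigma>)" unfolding edges_def by auto
  moreover have "finite (\<Union>\<sigma>\<in>T. Pow \<sigma>)" using fin by auto
  ultimately show ?thesis by (rule finite_subset)
qed

lemma finite_int_edges: "planar_triangulation T \<Longrightarrow> finite (int_edges T)"
  using finite_edges[of T] unfolding int_edges_def by auto

lemma int_edge_of_vert: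
  assumes "e \<in> edges T" "v \<in> e" "v \<in> int_verts T"
  shows "e \<in> int_edges T"
proof -
  have "v \<in> convex hull e" using assms(2) by (rule hull_inc)
  moreover have "v \<notin> frontier (region T)" using assms(3) unfolding int_verts_def by auto
  ultimately show ?thesis using assms(1) unfolding int_edges_def by auto
qed

lemma jv_cong: "(\<And>p. f p = f' p) \<Longrightarrow> f' \<in> Jvert T m rr v \<Longrightarrow> f \<in> Jvert T m rr v"
proof -
  assume "\<And>p. f p = f' p" "f' \<in> Jvert T m rr v"
  moreover have "f = f'" using \<open>\<And>p. f p = f' p\<close> by auto
  ultimately show ?thesis by simp
qed

lemma jedge_zero: "(\<lambda>p. 0) \<in> Jedge m rr e"
  unfolding Jedge_def multiples_def is_poly_def
  by (auto intro!: polys_zero exI[of _ "\<lambda>p. 0"] exI[of _ 0])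

lemma jedge_polys: "q \<in> Jedge m rr e \<Longrightarrow> q \<in> polys m"
  unfolding Jedge_def multiples_def by auto

lemma jv_zero: "(\<lambda>p. 0) \<in> Jvert T m rr v"
  unfolding Jvert_def by (auto intro!: exI[of _ "\<lambda>e p. 0"] jedge_zero)

lemma jedge_add: "q \<in> Jedge m rr e \<Longrightarrow> q' \<in> Jedge m rr e \<Longrightarrow> (\<lambda>p. q p + q' p) \<in> Jedge m rr e"
proof -
  assume "q \<in> Jedge m rr e" "q' \<in> Jedge m rr e"
  then obtain g g' where "q \<in> polys m" "is_poly g" "q = (\<lambda>p. lform e p ^ nat (rr e + 1) * g p)"
    "q' \<in> polys m" "is_poly g'" "q' = (\<lambda>p. lform e p ^ nat (rr e + 1) * g' p)"
    unfolding Jedge_def multiples_def by auto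
  moreover have "is_poly (\<lambda>p. g p + g' p)"
  proof -
    obtain n n' where "g \<in> polys n" "g' \<in> polys n'" using \<open>is_poly g\<close> \<open>is_poly g'\<close> unfolding is_poly_def by auto
    then have "g \<in> polys (max n n')" "g' \<in> polys (max n n')" by (auto intro: polys_mono)
    then show ?thesis unfolding is_poly_def by (auto intro: polys_add)
  qed
  ultimately show ?thesis unfolding Jedge_def multiples_def
    by (auto intro!: polys_add exI[of _ "\<lambda>p. g p + g' p"] simp: algebra_simps)
qed

lemma jv_add:
  assumes "f \<in> Jvert T m rr v" "f' \<in> Jvert T m rr v"
  shows "(\<lambda>p. f p + f' p) \<in> Jvert T m rr v"
proof -
  obtain h where h: "\<forall>e\<in>int_edges T. v \<in> e \<longrightarrow> h e \<in> Jedge m rr e" "f = (\<lambda>p. \<Sum>e\<in>{e \<in> int_edges T. v \<in> e}. h e p)"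
    using assms(1) unfolding Jvert_def by auto
  obtain h' where h': "\<forall>e\<in>int_edges T. v \<in> e \<longrightarrow> h' e \<in> Jedge m rr e" "f' = (\<lambda>p. \<Sum>e\<in>{e \<in> int_edges T. v \<in> e}. h' e p)"
    using assms(2) unfolding Jvert_def by auto
  show ?thesis unfolding Jvert_def
    by (rule CollectI, rule exI[of _ "\<lambda>e p. h e p + h' e p"]) (use h h' in \<open>auto intro: jedge_add simp: sum.distrib\<close>)
qed

lemma jv_sum: "(\<And>i. i \<in> A \<Longrightarrow> F i \<in> Jvert T m rr v) \<Longrightarrow> (\<lambda>p. \<Sum>i\<in>A. F i p) \<in> Jvert T m rr v"
proof (induction A rule: infinite_finite_induct)
  case (infinite A) then show ?case by (simp add: jv_zero)
next
  case empty then show ?case by (simp add: jv_zero)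
next
  case (insert x F) then show ?case by (simp add: jv_add)
qed

lemma jv_single:
  assumes "finite (int_edges T)" "e \<in> int_edges T" "v \<in> e" "q \<in> Jedge m rr e"
  shows "q \<in> Jvert T m rr v"
  unfolding Jvert_def
proof (rule CollectI, rule exI[of _ "\<lambda>e' p. if e' = e then q p else 0"], intro conjI)
  show "\<forall>e'\<in>int_edges T. v \<in> e' \<longrightarrow> (\<lambda>p. if e' = e then q p else 0) \<in> Jedge m rr e'"
  proof (intro ballI impI)
    fix e' assume "e' \<in> int_edges T" "v \<in> e'"
    show "(\<lambda>p. if e' = e then q p else 0) \<in> Jedge m rr e'"
      using assms(4) jedge_zero[of m rr e'] by (cases "e' = e") auto
  qed
  show "q = (\<lambda>p. \<Sum>e'\<in>{e \<in> int_edges T. v \<in> e}. if e' = e then q p else 0)"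
    using assms(1-3) by (auto simp: sum.delta')
qed



lemma polys_pow_aff:
  assumes "\<And>p. L p = \<alpha> * fst p + \<beta> * snd p + \<gamma>" "g \<in> polys n"
  shows "(\<lambda>p. L p ^ k * g p) \<in> polys (n + k)"
proof (induction k)
  case 0 then show ?case using assms(2) by simp
next
  case (Suc k)
  have "(\<lambda>p. L p * (L p ^ k * g p)) \<in> polys (Suc (n + k))"
    by (rule polys_mult_affg[OF Suc assms(1)])
  then show ?case by (simp add: mult.assoc)
qed

lemma zs_J:
  assumes pt: "planar_triangulation T" and vi: "v \<in> int_verts T"
    and card: "Suc k \<le> card (slopes T v)" and kr: "k = nat (r + 1)"
    and z: "zs v k m f"
  shows "f \<in> Jvert T m (\<lambda>e. r) v"
proof -
  define N where "N = {w. w \<noteq> v \<and> {v, w} \<in> edges T}"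
  have finE: "finite (edges T)" using finite_edges[OF pt] .
  have "N \<subseteq> \<Union>(edges T)" unfolding N_def by auto
  moreover have "finite (\<Union>(edges T))"
  proof -
    have "\<forall>e\<in>edges T. finite e" unfolding edges_def by (auto intro: card_ge_0_finite)
    then show ?thesis using finE by auto
  qed
  ultimately have finN: "finite N" by (rule finite_subset)
  have slE: "slopes T v = (\<lambda>w. span {w - v}) ` N" unfolding slopes_def N_def by simp
  obtain S' where S': "S' \<subseteq> slopes T v" "card S' = Suc k" "finite S'"
    using obtain_subset_with_card_n[OF card] by blast
  define wof where "wof s = (SOME w. w \<in> N \<and> span {w - v} = s)" for s
  have wof: "wof s \<in> N \<and> span {wof s - v} = s" if "s \<in> S'" for s
  proof -
    have "s \<in> (\<lambda>w. span {w - v}) ` N" using that S'(1) slE by auto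
    then have "\<exists>w. w \<in> N \<and> span {w - v} = s" by (metis (no_types, lifting) imageE)
    then show ?thesis unfolding wof_def by (rule someI_ex)
  qed
  define d where "d s = wof s - v" for s
  have d0: "d s \<noteq> 0" if "s \<in> S'" for s using wof[OF that] unfolding d_def N_def by auto
  have "finite ((\<lambda>s. fst (d s) / snd (d s)) ` S')" using S'(3) by simp
  then obtain t :: real where t: "t \<notin> (\<lambda>s. fst (d s) / snd (d s)) ` S'"
    using ex_new_if_finite[OF infinite_UNIV_char_0] by blast
  define A where "A s = fst (d s) - t * snd (d s)" for s
  have A0: "A s \<noteq> 0" if "s \<in> S'" for s
  proof (cases "snd (d s) = 0")
    case True
    then have "fst (d s) \<noteq> 0" using d0[OF that] by (simp add: prod_eq_iff)
    then show ?thesis using True unfolding A_def by simp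
  next
    case False
    have "t \<noteq> fst (d s) / snd (d s)" using t that by auto
    then show ?thesis using False unfolding A_def by (simp add: field_simps)
  qed
  define lam where "lam s = - snd (d s) / A s" for s
  have inj: "inj_on lam S'"
  proof (rule inj_onI)
    fix s1 s2 assume s: "s1 \<in> S'" "s2 \<in> S'" "lam s1 = lam s2"
    have "snd (d s1) * A s2 = snd (d s2) * A s1"
      using s A0[OF s(1)] A0[OF s(2)] unfolding lam_def by (simp add: field_simps)
    then have "det2 (d s1) (d s2) = 0" unfolding A_def det2_def by (simp add: algebra_simps)
    then have "span {d s1} = span {d s2}" using span_par d0 s by blast
    then show "s1 = s2" using wof s unfolding d_def by metis
  qed
  have cardL: "card (lam ` S') = Suc k" using card_image[OF inj] S'(2) by simp
  define ell where "ell s p = det2 (d s) (p - v)" for s p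
  have ell_eq: "ell s p = A s * (Ys v p + lam s * Xs t v p)" if "s \<in> S'" for s p
    using A0[OF that] unfolding ell_def lam_def A_def Xs_def Ys_def det2_def
    by (simp add: field_simps)
  have ell_aff: "ell s p = (- snd (d s)) * fst p + fst (d s) * snd p + (snd (d s) * fst v - fst (d s) * snd v)" for s p
    unfolding ell_def det2_def by (simp add: algebra_simps)
  have finIE: "finite (int_edges T)" using finite_int_edges[OF pt] .
  have single: "(\<lambda>p. c * ell s p ^ k * G p) \<in> Jvert T m (\<lambda>e. r) v"
    if s: "s \<in> S'" and G: "G \<in> polys (m - k)" and km: "k \<le> m" for s c G
  proof -
    define e where "e = {v, wof s}"
    have wN: "wof s \<in> N" using wof[OF s] by simp
    then have vw: "v \<noteq> wof s" and eE: "e \<in> edges T" unfolding N_def e_def by auto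
    have eI: "e \<in> int_edges T" by (rule int_edge_of_vert[OF eE _ vi]) (simp add: e_def)
    obtain \<sigma> where \<sigma>: "\<sigma> = 1 \<or> \<sigma> = -1" "\<forall>x. lform e x = \<sigma> * det2 (wof s - v) (x - v)"
      using lform_sign[OF vw] unfolding e_def by blast
    have lf: "lform e x = \<sigma> * ell s x" for x using spec[OF \<sigma>(2), of x] unfolding ell_def d_def by simp
    have ss: "\<sigma> ^ k * \<sigma> ^ k = 1" using \<sigma>(1) by (auto simp: power_mult_distrib[symmetric])
    have P: "(\<lambda>p. c * ell s p ^ k * G p) \<in> polys m"
    proof -
      have "(\<lambda>p. ell s p ^ k * G p) \<in> polys (m - k + k)"
        by (rule polys_pow_aff[OF ell_aff G])
      then have "(\<lambda>p. c * (ell s p ^ k * G p)) \<in> polys m" using km by (simp add: polys_scale)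
      then show ?thesis by (simp add: mult.assoc)
    qed
    have IP: "is_poly (\<lambda>p. \<sigma> ^ k * c * G p)"
      unfolding is_poly_def using polys_scale[OF G] by blast
    have eq: "(\<lambda>p. c * ell s p ^ k * G p) = (\<lambda>p. lform e p ^ nat (r + 1) * (\<sigma> ^ k * c * G p))"
    proof
      fix p
      have L: "lform e p ^ nat (r + 1) = \<sigma> ^ k * ell s p ^ k"
        using lf[of p] kr by (simp add: power_mult_distrib)
      have "lform e p ^ nat (r + 1) * (\<sigma> ^ k * c * G p) = (\<sigma> ^ k * \<sigma> ^ k) * (c * ell s p ^ k * G p)"
        by (simp only: L) (simp add: ac_simps)
      then have "lform e p ^ nat (r + 1) * (\<sigma> ^ k * c * G p) = c * ell s p ^ k * G p"
        using ss by (metis mult_1)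
      then show "c * ell s p ^ k * G p = lform e p ^ nat (r + 1) * (\<sigma> ^ k * c * G p)"
        by (rule sym)
    qed
    have "(\<lambda>p. c * ell s p ^ k * G p) \<in> Jedge m (\<lambda>e. r) e"
      unfolding Jedge_def multiples_def using P IP eq by auto
    moreover have "v \<in> e" by (simp add: e_def)
    ultimately show ?thesis using jv_single[OF finIE eI] by blast
  qed
  from zs_rep[OF z, of t] show ?thesis
  proof
    assume f0: "\<forall>p. f p = 0"
    show ?thesis by (rule jv_cong[OF _ jv_zero]) (use f0 in blast)
  next
    assume "k \<le> m \<and> (\<exists>g. (\<forall>j\<le>k. g j \<in> polys (m - k)) \<and> (\<forall>p. f p = hrep t v k g p))"
    then obtain g where km: "k \<le> m" and g: "\<forall>j\<le>k. g j \<in> polys (m - k)" "\<forall>p. f p = hrep t v k g p"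
      by blast
    have trm: "(\<lambda>p. Xs t v p ^ j * Ys v p ^ (k - j) * g j p) \<in> Jvert T m (\<lambda>e. r) v" if j: "j \<le> k" for j
    proof -
      obtain c where c: "\<forall>X Y. X ^ j * Y ^ (k - j) = (\<Sum>l\<in>lam ` S'. c l * (Y + l * X) ^ k)"
        using forms_span[OF finite_imageI[OF S'(3)] cardL j] by blast
      have "Xs t v p ^ j * Ys v p ^ (k - j) * g j p = (\<Sum>s\<in>S'. (c (lam s) / A s ^ k) * ell s p ^ k * g j p)" for p
      proof -
        have "Xs t v p ^ j * Ys v p ^ (k - j) = (\<Sum>s\<in>S'. c (lam s) * (Ys v p + lam s * Xs t v p) ^ k)"
          using c sum.reindex[OF inj, of "\<lambda>l. c l * (Ys v p + l * Xs t v p) ^ k"] by simp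
        also have "\<dots> = (\<Sum>s\<in>S'. (c (lam s) / A s ^ k) * ell s p ^ k)"
        proof (intro sum.cong refl)
          fix s assume s: "s \<in> S'"
          have "ell s p ^ k = A s ^ k * (Ys v p + lam s * Xs t v p) ^ k"
            by (simp only: ell_eq[OF s] power_mult_distrib)
          then show "c (lam s) * (Ys v p + lam s * Xs t v p) ^ k = (c (lam s) / A s ^ k) * ell s p ^ k"
            using A0[OF s] by simp
        qed
        finally show ?thesis by (simp add: sum_distrib_right)
      qed
      then have eqt: "\<And>p. Xs t v p ^ j * Ys v p ^ (k - j) * g j p = (\<Sum>s\<in>S'. (c (lam s) / A s ^ k) * ell s p ^ k * g j p)" .
      have gj: "g j \<in> polys (m - k)" using g(1) j by blast
      have "(\<lambda>p. \<Sum>s\<in>S'. (c (lam s) / A s ^ k) * ell s p ^ k * g j p) \<in> Jvert T m (\<lambda>e. r) v"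
        by (rule jv_sum) (rule single[OF _ gj km])
      then show ?thesis by (rule jv_cong[OF eqt])
    qed
    show ?thesis
    proof (rule jv_cong[OF _ jv_sum[of "{..k}" "\<lambda>j p. Xs t v p ^ j * Ys v p ^ (k - j) * g j p"]])
      show "f p = (\<Sum>j\<le>k. Xs t v p ^ j * Ys v p ^ (k - j) * g j p)" for p
        using g(2) unfolding hrep_def by blast
      show "(\<lambda>p. Xs t v p ^ j * Ys v p ^ (k - j) * g j p) \<in> Jvert T m (\<lambda>e. r) v" if "j \<in> {..k}" for j
        using trm that by blast
    qed
  qed
qed



lemma jedge_sigma:
  assumes "e \<subseteq> \<sigma>" "q \<in> polys m"
  shows "q \<in> Jedge m (\<lambda>e. if e \<subseteq> \<sigma> then -1 else r) e"
  using assms unfolding Jedge_def multiples_def is_poly_def by auto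

lemma jedge_other:
  assumes "\<not> e \<subseteq> \<sigma>"
  shows "Jedge m (\<lambda>e. if e \<subseteq> \<sigma> then -1 else r) e = Jedge m (\<lambda>e. r) e"
  using assms unfolding Jedge_def by simp

lemma jedge_mono:
  "q \<in> Jedge m (\<lambda>e. r) e \<Longrightarrow> q \<in> Jedge m (\<lambda>e. if e \<subseteq> \<sigma> then -1 else r) e"
  by (cases "e \<subseteq> \<sigma>") (auto simp: jedge_other intro: jedge_sigma jedge_polys)

lemma jvert_mono:
  "f \<in> Jvert T m (\<lambda>e. r) g \<Longrightarrow> f \<in> Jvert T m (\<lambda>e. if e \<subseteq> \<sigma> then -1 else r) g"
  unfolding Jvert_def using jedge_mono by blast

lemma jvert_other:
  assumes "g \<notin> \<sigma>"
  shows "Jvert T m (\<lambda>e. if e \<subseteq> \<sigma> then -1 else r) g = Jvert T m (\<lambda>e. r) g"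
proof -
  have "\<And>e. g \<in> e \<Longrightarrow> Jedge m (\<lambda>e. if e \<subseteq> \<sigma> then -1 else r) e = Jedge m (\<lambda>e. r) e"
    using assms by (intro jedge_other) auto
  then show ?thesis unfolding Jvert_def by (intro Collect_cong) (metis (no_types, lifting))
qed

lemma H0_mono:
  "H0_vanishes T m (\<lambda>e. r) \<Longrightarrow> H0_vanishes T m (\<lambda>e. if e \<subseteq> \<sigma> then -1 else r)"
  unfolding H0_vanishes_def using jvert_mono by metis

lemma d1_polys:
  assumes "\<forall>e\<in>int_edges T. F e \<in> polys m"
  shows "d1 T F u \<in> polys m"
  unfolding d1_def using assms by (auto intro!: polys_sum polys_scale)



lemma edges_at_vertex:
  assumes pt: "planar_triangulation T" and sT: "\<sigma> \<in> T" and sig: "\<sigma> = {u, w1, w2}"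
    and d: "u \<noteq> w1" "u \<noteq> w2" "w1 \<noteq> w2" and ui: "u \<in> int_verts T"
  shows "{e \<in> int_edges T. u \<in> e \<and> e \<subseteq> \<sigma>} = {{u, w1}, {u, w2}}"
proof
  show "{e \<in> int_edges T. u \<in> e \<and> e \<subseteq> \<sigma>} \<subseteq> {{u, w1}, {u, w2}}"
  proof
    fix e assume e: "e \<in> {e \<in> int_edges T. u \<in> e \<and> e \<subseteq> \<sigma>}"
    then have "card e = 2" unfolding int_edges_def edges_def by auto
    then obtain x y where xy: "e = {x, y}" "x \<noteq> y" by (auto simp: card_2_iff)
    show "e \<in> {{u, w1}, {u, w2}}" using e xy sig d by auto
  qed
next
  have "{u, w1} \<in> edges T" "{u, w2} \<in> edges T"
    using sT sig d unfolding edges_def by auto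
  then show "{{u, w1}, {u, w2}} \<subseteq> {e \<in> int_edges T. u \<in> e \<and> e \<subseteq> \<sigma>}"
    using int_edge_of_vert[OF _ _ ui] sig by auto
qed

lemma H1_main:
  assumes pt: "planar_triangulation T" and sT: "\<sigma> \<in> T"
    and H1: "H1_vanishes T m (\<lambda>e. r)"
    and slo: "\<forall>g\<in>int_verts T. Suc k \<le> card (slopes T g)"
    and kr: "k = nat (r + 1)"
    and k3: "3 * k \<le> 2 * m + 2"
  shows "H1_vanishes T m (\<lambda>e. if e \<subseteq> \<sigma> then -1 else r)"
  unfolding H1_vanishes_def
proof (intro allI impI)
  let ?rs = "\<lambda>e. if e \<subseteq> \<sigma> then -1 else r"
  fix F assume FF: "(\<forall>e\<in>int_edges T. F e \<in> polys m) \<and> (\<forall>g\<in>int_verts T. d1 T F g \<in> Jvert T m ?rs g)"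
  have F1: "\<forall>e\<in>int_edges T. F e \<in> polys m" using FF by (rule conjunct1)
  have F2: "\<forall>g\<in>int_verts T. d1 T F g \<in> Jvert T m ?rs g" using FF by (rule conjunct2)
  have tri: "\<forall>\<sigma>\<in>T. \<exists>a b c. \<sigma> = {a, b, c} \<and> det2 (b - a) (c - a) \<noteq> 0"
    using pt unfolding planar_triangulation_def by (elim conjE)
  obtain a b c where abc: "\<sigma> = {a, b, c}" "det2 (b - a) (c - a) \<noteq> 0"
    using tri sT by blast
  have dab: "a \<noteq> b" "a \<noteq> c" "b \<noteq> c" using abc(2) unfolding det2_def by auto
  define t where "t u = d1 T F u" for u
  have tP: "t u \<in> polys m" for u unfolding t_def by (rule d1_polys[OF F1])
  have ex: "\<exists>X. zs a k m (fst X) \<and> zs b k m (fst (snd X)) \<and> zs c k m (snd (snd X)) \<and> (\<forall>p. t u p = fst X p + fst (snd X) p + snd (snd X) p)" for u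
  proof -
    obtain A B C where "zs a k m A" "zs b k m B" "zs c k m C" "\<forall>p. t u p = A p + B p + C p"
    proof -
      have kk: "k + k + k \<le> 2 * m + 2" using k3 by simp
      show ?thesis using decomp[OF abc(2) tP[of u] kk] that by blast
    qed
    then show ?thesis by (intro exI[of _ "(A, B, C)"]) simp
  qed
  define Q where "Q u = (SOME X. zs a k m (fst X) \<and> zs b k m (fst (snd X)) \<and> zs c k m (snd (snd X)) \<and> (\<forall>p. t u p = fst X p + fst (snd X) p + snd (snd X) p))" for u
  define PA where "PA u = fst (Q u)" for u
  define PB where "PB u = fst (snd (Q u))" for u
  define PC where "PC u = snd (snd (Q u))" for u
  have PABC: "zs a k m (PA u) \<and> zs b k m (PB u) \<and> zs c k m (PC u) \<and> (\<forall>p. t u p = PA u p + PB u p + PC u p)" for u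
    unfolding PA_def PB_def PC_def Q_def by (rule someI_ex[OF ex])
  have PA: "zs a k m (PA u)" and PB: "zs b k m (PB u)" and PC: "zs c k m (PC u)"
    and Pt: "t u p = PA u p + PB u p + PC u p" for u p
    using PABC[of u] by blast+
  define P where "P u w = (if w = a then PA u else if w = b then PB u else PC u)" for u w
  have Pz: "zs w k m (P u w)" if "w \<in> \<sigma>" for u w
  proof -
    have "w = a \<or> w = b \<or> w = c" using that abc(1) by auto
    then show ?thesis using PA[of u] PB[of u] PC[of u] dab unfolding P_def by auto
  qed
  have Ppoly: "P u w \<in> polys m" for u w
    unfolding P_def using PA[of u] PB[of u] PC[of u] zs_polys by auto
  have tsum: "t u p = P u a p + P u b p + P u c p" for u p
    using Pt[of u p] dab unfolding P_def by simp
  define third where "third e = (THE z. z \<in> \<sigma> \<and> z \<notin> e)" for e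
  define FL where "FL x y z p = P x z p + P z y p - P y z p - P z x p" for x y z p
  define f where "f e = FL (ehead e) (etail e) (third e)" for e
  have fP: "f e \<in> polys m" for e
    unfolding f_def FL_def[abs_def] by (intro polys_diff polys_add Ppoly)
  have third: "third {u, w} = z" if "\<sigma> = {u, w, z}" "u \<noteq> w" "u \<noteq> z" "w \<noteq> z" for u w z
    unfolding third_def by (rule the_equality) (use that in auto)
  have contrib: "vsign u {u, w} * f {u, w} p = FL u w z p"
    if "\<sigma> = {u, w, z}" "u \<noteq> w" "u \<noteq> z" "w \<noteq> z" for u w z p
  proof -
    have th: "third {u, w} = z" by (rule third[OF that])
    from head_tail[OF that(2)] show ?thesis
    proof
      assume h: "ehead {u, w} = w \<and> etail {u, w} = u"
      then have "vsign u {u, w} = -1" using that(2) unfolding vsign_def by auto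
      then show ?thesis using h th unfolding f_def FL_def by simp
    next
      assume h: "ehead {u, w} = u \<and> etail {u, w} = w"
      then have "vsign u {u, w} = 1" unfolding vsign_def by auto
      then show ?thesis using h th unfolding f_def by simp
    qed
  qed
  define F' where "F' e = (\<lambda>p. F e p - (if e \<subseteq> \<sigma> then f e p else 0))" for e
  have finIE: "finite (int_edges T)" using finite_int_edges[OF pt] .
  have d1F': "d1 T F' u p = d1 T F u p - (\<Sum>e\<in>{e \<in> int_edges T. u \<in> e \<and> e \<subseteq> \<sigma>}. vsign u e * f e p)" for u p
  proof -
    have fin: "finite {e \<in> int_edges T. u \<in> e}" using finIE by simp
    have "d1 T F' u p = (\<Sum>e\<in>{e \<in> int_edges T. u \<in> e}. vsign u e * F e p)
          - (\<Sum>e\<in>{e \<in> int_edges T. u \<in> e}. if e \<subseteq> \<sigma> then vsign u e * f e p else 0)"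
      unfolding d1_def F'_def by (simp add: sum_subtractf[symmetric] right_diff_distrib if_distrib cong: if_cong)
    also have "(\<Sum>e\<in>{e \<in> int_edges T. u \<in> e}. if e \<subseteq> \<sigma> then vsign u e * f e p else 0)
        = (\<Sum>e\<in>{e \<in> {e \<in> int_edges T. u \<in> e}. e \<subseteq> \<sigma>}. vsign u e * f e p)"
      by (rule sum.inter_filter[OF fin, symmetric])
    also have "{e \<in> {e \<in> int_edges T. u \<in> e}. e \<subseteq> \<sigma>} = {e \<in> int_edges T. u \<in> e \<and> e \<subseteq> \<sigma>}" by auto
    finally show ?thesis unfolding d1_def by simp
  qed
  have good: "d1 T F' u \<in> Jvert T m (\<lambda>e. r) u"
    if ui: "u \<in> int_verts T" and sig: "\<sigma> = {u, w1, w2}" and d: "u \<noteq> w1" "u \<noteq> w2" "w1 \<noteq> w2" for u w1 w2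
  proof -
    have sig2: "\<sigma> = {u, w2, w1}" using sig by auto
    have E: "{e \<in> int_edges T. u \<in> e \<and> e \<subseteq> \<sigma>} = {{u, w1}, {u, w2}}"
      by (rule edges_at_vertex[OF pt sT sig d ui])
    have ne: "{u, w1} \<noteq> {u, w2}" using d by (auto simp: doubleton_eq_iff)
    have "d1 T F' u p = P u u p + P w1 u p + P w2 u p" for p
    proof -
      have "d1 T F' u p = t u p - (FL u w1 w2 p + FL u w2 w1 p)"
        unfolding d1F' E t_def using ne contrib[OF sig d] contrib[OF sig2 d(2,1) d(3)[symmetric]]
        by simp
      also have "t u p = P u u p + P u w1 p + P u w2 p"
      proof -
        have "t u p = (\<Sum>w\<in>\<sigma>. P u w p)" using tsum[of u p] abc(1) dab by simp
        also have "\<dots> = P u u p + P u w1 p + P u w2 p" using sig d by simp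
        finally show ?thesis .
      qed
      finally show ?thesis unfolding FL_def by simp
    qed
    moreover have "zs u k m (\<lambda>p. P u u p + P w1 u p + P w2 u p)"
      using Pz[of u] sig by (intro z_add) auto
    ultimately have "zs u k m (d1 T F' u)"
      by (metis (no_types, lifting) ext)
    then show ?thesis by (rule zs_J[OF pt ui slo[rule_format, OF ui] kr])
  qed
  have F'1: "\<forall>e\<in>int_edges T. F' e \<in> polys m"
  proof
    fix e assume e: "e \<in> int_edges T"
    have "(\<lambda>p. if e \<subseteq> \<sigma> then f e p else 0) \<in> polys m"
      using fP[of e] polys_zero by (cases "e \<subseteq> \<sigma>") auto
    then show "F' e \<in> polys m" unfolding F'_def using F1 e by (auto intro!: polys_diff)
  qed
  have F'2: "\<forall>g\<in>int_verts T. d1 T F' g \<in> Jvert T m (\<lambda>e. r) g"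
  proof
    fix g assume gi: "g \<in> int_verts T"
    show "d1 T F' g \<in> Jvert T m (\<lambda>e. r) g"
    proof (cases "g \<in> \<sigma>")
      case True
      then consider "g = a" | "g = b" | "g = c" using abc by auto
      then show ?thesis
      proof cases
        case 1 then show ?thesis using good[OF gi, of b c] abc dab by auto
      next
        case 2 then show ?thesis using good[OF gi, of a c] abc dab by (auto simp: insert_commute)
      next
        case 3 then show ?thesis using good[OF gi, of a b] abc dab by (auto simp: insert_commute)
      qed
    next
      case False
      have E0: "{e \<in> int_edges T. g \<in> e \<and> e \<subseteq> \<sigma>} = {}" using False by auto
      have "d1 T F' g p = d1 T F g p" for p using d1F'[of g p] unfolding E0 by simp
      then have "d1 T F' g = d1 T F g" by (rule ext)
      moreover have "d1 T F g \<in> Jvert T m ?rs g" using F2 gi by blast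
      ultimately show ?thesis using jvert_other[OF False, of T m r] by simp
    qed
  qed
  obtain B K where BK: "\<forall>s\<in>T. B s \<in> polys m" "\<forall>e\<in>int_edges T. K e \<in> Jedge m (\<lambda>e. r) e"
    "\<forall>e\<in>int_edges T. \<forall>p. F' e p = d2 T B e p + K e p"
    using H1 F'1 F'2 unfolding H1_vanishes_def by blast
  define K' where "K' e = (\<lambda>p. K e p + (if e \<subseteq> \<sigma> then f e p else 0))" for e
  show "\<exists>B K. (\<forall>s\<in>T. B s \<in> polys m) \<and> (\<forall>e\<in>int_edges T. K e \<in> Jedge m ?rs e) \<and>
              (\<forall>e\<in>int_edges T. \<forall>p. F e p = d2 T B e p + K e p)"
  proof (intro exI conjI)
    show "\<forall>s\<in>T. B s \<in> polys m" using BK(1) .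
    show "\<forall>e\<in>int_edges T. K' e \<in> Jedge m ?rs e"
    proof
      fix e assume e: "e \<in> int_edges T"
      show "K' e \<in> Jedge m ?rs e"
      proof (cases "e \<subseteq> \<sigma>")
        case True
        have "K' e \<in> polys m" unfolding K'_def using True BK(2) e fP jedge_polys by (auto intro!: polys_add)
        then show ?thesis by (rule jedge_sigma[OF True])
      next
        case False
        then have "K' e = K e" unfolding K'_def by auto
        then show ?thesis using BK(2) e jedge_other[OF False] by simp
      qed
    qed
    show "\<forall>e\<in>int_edges T. \<forall>p. F e p = d2 T B e p + K' e p"
    proof (intro ballI allI)
      fix e p assume e: "e \<in> int_edges T"
      have "F' e p = d2 T B e p + K e p" using BK(3) e by blast
      then show "F e p = d2 T B e p + K' e p" unfolding K'_def F'_def by (simp add: algebra_simps)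
    qed
  qed
qed



theorem mainTheorem6:
  fixes T :: "pt set set" and m :: nat and r :: int and \<sigma> :: "pt set"
  assumes "planar_triangulation T"
    and "r \<ge> -1"
    and "lower_acyclic T m (\<lambda>e. r)"
    and "\<forall>g\<in>int_verts T. int (card (slopes T g)) \<ge> r + 2"
    and "real m > 3 * real_of_int r / 2"
    and "\<sigma> \<in> T"
  shows "lower_acyclic T m (\<lambda>e. if e \<subseteq> \<sigma> then -1 else r)"
proof -
  define k where "k = nat (r + 1)"
  have kr: "int k = r + 1" unfolding k_def using assms(2) by simp
  have slo: "\<forall>g\<in>int_verts T. Suc k \<le> card (slopes T g)"
  proof
    fix g assume "g \<in> int_verts T"
    then have "int (card (slopes T g)) \<ge> r + 2" using assms(4) by blast
    then show "Suc k \<le> card (slopes T g)" using kr by linarith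
  qed
  have "2 * real m > 3 * real_of_int r" using assms(5) by simp
  then have "real_of_int (2 * int m) > real_of_int (3 * r)" by simp
  then have "2 * int m > 3 * r" by linarith
  then have k3: "3 * k \<le> 2 * m + 2" using kr by linarith
  have LA: "H1_vanishes T m (\<lambda>e. r)" "H0_vanishes T m (\<lambda>e. r)"
    using assms(3) unfolding lower_acyclic_def by auto
  show ?thesis unfolding lower_acyclic_def
    using H1_main[OF assms(1) assms(6) LA(1) slo k_def k3] H0_mono[OF LA(2)] by blast
qed


end
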